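(* Let $I=[-\tfrac12,\tfrac12]$, $\Sigma=I\times I$. If $(\mu_n)$ is a sequence of $K$-good measures on $\Sigma$ and $\nu_n=f\mu_n$, where $f:\Sigma\to\mathbb{R}$ is $\ell$-Lipschitz with $\|f\|_\infty\le\ell$, then each $\nu_n$ is a $(3\ell K+\ell)$-good measure.
   Context: $f\mu$ denotes the measure with density $f$ with respect to $\mu$. Vertical leaves are $\gamma=\{\gamma\}\times I$. For a measure $\mu$ on $\Sigma$ disintegrated along vertical leaves as $\mu(A)=\int_I\mu_\gamma(A\cap\gamma)\phi_x(\gamma)\,d\gamma$ (with $\mu_\gamma$ probability measures on the leaves and $\phi_x$ the density of the marginal on the $x$-axis), let $\mu|_\gamma=(\pi_y)_*(\phi_x(\gamma)\mu_\gamma)$, a finite measure on $I$ ($\pi_y(x,y)=y$). For finite measures on $I$, $W_1^0(\mu,\nu)=\sup\{|\int g\,d\mu-\int g\,d\nu|: g\ 1\text{-Lipschitz},\ \|g\|_\infty\le1\}$. For $G:I\to M(I)$ (finite measures on $I$), $\operatorname{Var}(G)=\sup\sum_iW_1^0(G(x_i),G(x_{i+1}))$ over finite increasing sequences in $I$. A measure $\mu$ on $\Sigma$ is $K$-good if $G_\mu(\gamma)=\mu|_\gamma$ is defined for every $\gamma\in I$ and $\operatorname{Var}(G_\mu)\le K$. *)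

theory Defs
  imports "HOL-Probability.Probability"
begin

definition I_int :: "real set" where
  "I_int = {-1/2..1/2}"

definition Sq :: "(real \<times> real) set" where
  "Sq = I_int \<times> I_int"

text \<open>A finite signed measure on I is represented by a pair (P, N) of finite
  measures on I, standing for P - N.  Integration of g against it:\<close>
definition sint :: "real measure \<times> real measure \<Rightarrow> (real \<Rightarrow> real) \<Rightarrow> real" where
  "sint m g = (\<integral>y. g y \<partial>(fst m)) - (\<integral>y. g y \<partial>(snd m))"

definition W10 :: "real measure \<times> real measure \<Rightarrow> real measure \<times> real measure \<Rightarrow> real" where
  "W10 m1 m2 = Sup {\<bar>sint m1 g - sint m2 g\<bar> | g.
                      1-lipschitz_on I_int g \<and> (\<forall>y\<in>I_int. \<bar>g y\<bar> \<le> 1)}"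

definition Var :: "(real \<Rightarrow> real measure \<times> real measure) \<Rightarrow> ereal" where
  "Var G = (SUP xs \<in> {xs. sorted_wrt (<) xs \<and> set xs \<subseteq> I_int}.
              ereal (\<Sum>i<length xs - 1. W10 (G (xs ! i)) (G (xs ! Suc i))))"

definition fin_meas_I :: "real measure \<Rightarrow> bool" where
  "fin_meas_I m \<longleftrightarrow> finite_measure m \<and> sets m = sets (restrict_space borel I_int)"

definition slice :: "(real \<times> real) set \<Rightarrow> real \<Rightarrow> real set" where
  "slice A \<gamma> = {y. (\<gamma>, y) \<in> A}"

definition restrictions :: "(real \<times> real) measure \<Rightarrow> (real \<Rightarrow> real measure) \<Rightarrow> bool" where
  "restrictions \<mu> G \<longleftrightarrow>
     (\<forall>\<gamma>\<in>I_int. fin_meas_I (G \<gamma>)) \<and>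
     (\<forall>A\<in>sets \<mu>.
        (\<lambda>\<gamma>. emeasure (G \<gamma>) (slice A \<gamma>)) \<in> borel_measurable (restrict_space lborel I_int) \<and>
        emeasure \<mu> A = (\<integral>\<^sup>+\<gamma>\<in>I_int. emeasure (G \<gamma>) (slice A \<gamma>) \<partial>lborel))"

definition K_good :: "real \<Rightarrow> (real \<times> real) measure \<Rightarrow> bool" where
  "K_good K \<mu> \<longleftrightarrow>
     (\<exists>G. restrictions \<mu> G \<and> Var (\<lambda>\<gamma>. (G \<gamma>, null_measure (G \<gamma>))) \<le> ereal K)"

definition restrictions_signed ::
  "((real \<times> real) set \<Rightarrow> real) \<Rightarrow> (real \<Rightarrow> real measure \<times> real measure) \<Rightarrow> bool" where
  "restrictions_signed \<nu> G \<longleftrightarrow>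
     (\<forall>\<gamma>\<in>I_int. fin_meas_I (fst (G \<gamma>)) \<and> fin_meas_I (snd (G \<gamma>))) \<and>
     (\<forall>A\<in>sets (restrict_space borel Sq).
        set_integrable lborel I_int
          (\<lambda>\<gamma>. measure (fst (G \<gamma>)) (slice A \<gamma>) - measure (snd (G \<gamma>)) (slice A \<gamma>)) \<and>
        \<nu> A = (LINT \<gamma>:I_int|lborel.
                 measure (fst (G \<gamma>)) (slice A \<gamma>) - measure (snd (G \<gamma>)) (slice A \<gamma>)))"

definition K_good_signed :: "real \<Rightarrow> ((real \<times> real) set \<Rightarrow> real) \<Rightarrow> bool" where
  "K_good_signed K \<nu> \<longleftrightarrow> (\<exists>G. restrictions_signed \<nu> G \<and> Var G \<le> ereal K)"

definition dens :: "(real \<times> real) measure \<Rightarrow> (real \<times> real \<Rightarrow> real) \<Rightarrow> (real \<times> real) set \<Rightarrow> real" where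
  "dens \<mu> f A = (LINT z:A|\<mu>. f z)"

end

theory Submission
  imports Defs
begin


lemma space_GI: "fin_meas_I M \<Longrightarrow> space M = I_int"
  unfolding fin_meas_I_def by (metis sets_eq_imp_space_eq space_restrict_space2 sets.sets_into_space space_borel inf_top.right_neutral space_restrict_space)

lemma meas_pair:
  assumes "fin_meas_I M" "\<gamma> \<in> I_int" "sets \<mu> = sets (restrict_space borel Sq)"
  shows "(\<lambda>y. (\<gamma>, y)) \<in> measurable M \<mu>"
proof -
  have "(\<lambda>y. (\<gamma>, y)) \<in> measurable (restrict_space borel I_int) (restrict_space borel Sq)"
    by (rule measurable_restrict_space3) (use assms(2) in \<open>auto simp: Sq_def\<close>)
  then show ?thesis using assms(1,3) unfolding fin_meas_I_def
    by (metis measurable_cong_sets)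
qed



abbreviation "NI \<equiv> restrict_space lborel I_int"

lemma I_sets: "I_int \<inter> space lborel \<in> sets lborel" by (simp add: I_int_def)

lemma space_mu: "sets \<mu> = sets (restrict_space borel Sq) \<Longrightarrow> space \<mu> = Sq"
  by (metis sets_eq_imp_space_eq space_restrict_space2 sets.sets_into_space space_borel inf_top.right_neutral space_restrict_space)

lemma mcong: "(\<And>w. w \<in> space M \<Longrightarrow> f w = g w) \<Longrightarrow> g \<in> measurable M N \<Longrightarrow> f \<in> measurable M N"
  using measurable_cong by metis

lemma disint:
  assumes sm: "sets \<mu> = sets (restrict_space borel Sq)" and R: "restrictions \<mu> G"
    and h: "h \<in> borel_measurable \<mu>"
  notes sp = space_mu[OF sm]
  shows "(\<lambda>\<gamma>. \<integral>\<^sup>+y. h (\<gamma>,y) \<partial>G \<gamma>) \<in> borel_measurable NI \<and>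
         (\<integral>\<^sup>+z. h z \<partial>\<mu>) = (\<integral>\<^sup>+\<gamma>. (\<integral>\<^sup>+y. h (\<gamma>,y) \<partial>G \<gamma>) \<partial>NI)"
  using h
proof (induction rule: borel_measurable_induct)
  case (cong f g)
  have e: "(\<integral>\<^sup>+y. f (\<gamma>,y) \<partial>G \<gamma>) = (\<integral>\<^sup>+y. g (\<gamma>,y) \<partial>G \<gamma>)" if "\<gamma> \<in> space NI" for \<gamma>
  proof -
    have gI: "\<gamma> \<in> I_int" using that by (simp add: space_restrict_space)
    have f: "fin_meas_I (G \<gamma>)" using R gI unfolding restrictions_def by auto
    show ?thesis
      by (rule nn_integral_cong) (use cong(3) gI space_GI[OF f] sp in \<open>auto simp: Sq_def\<close>)
  qed
  have "(\<integral>\<^sup>+z. f z \<partial>\<mu>) = (\<integral>\<^sup>+z. g z \<partial>\<mu>)" by (rule nn_integral_cong) (use cong(3) in auto)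
  moreover have "(\<integral>\<^sup>+\<gamma>. (\<integral>\<^sup>+y. f (\<gamma>,y) \<partial>G \<gamma>) \<partial>NI) = (\<integral>\<^sup>+\<gamma>. (\<integral>\<^sup>+y. g (\<gamma>,y) \<partial>G \<gamma>) \<partial>NI)"
    by (rule nn_integral_cong) (use e in auto)
  moreover have "(\<lambda>\<gamma>. \<integral>\<^sup>+y. f (\<gamma>,y) \<partial>G \<gamma>) \<in> borel_measurable NI"
    by (rule mcong[OF _ cong(4)[THEN conjunct1]]) (simp add: e)
  ultimately show ?case using cong(4) by simp
next
  case (set A)
  have e: "(\<integral>\<^sup>+y. indicator A (\<gamma>,y) \<partial>G \<gamma>) = emeasure (G \<gamma>) (slice A \<gamma>)" if "\<gamma> \<in> space NI" for \<gamma>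
  proof -
    have gI: "\<gamma> \<in> I_int" using that by (simp add: space_restrict_space)
    have f: "fin_meas_I (G \<gamma>)" using R gI unfolding restrictions_def by auto
    have "slice A \<gamma> = (\<lambda>y. (\<gamma>, y)) -` A \<inter> space (G \<gamma>)"
      using sets.sets_into_space[OF set] sp space_GI[OF f] 
      by (auto simp: slice_def Sq_def)
    then have "slice A \<gamma> \<in> sets (G \<gamma>)"
      using measurable_sets[OF meas_pair[OF f gI sm] set] by simp
    moreover have "indicator A (\<gamma>,y) = (indicator (slice A \<gamma>) y :: ennreal)" for y
      by (simp add: slice_def indicator_def)
    ultimately show ?thesis by simp
  qed
  have m: "(\<lambda>\<gamma>. emeasure (G \<gamma>) (slice A \<gamma>)) \<in> borel_measurable NI"
    using R set unfolding restrictions_def by auto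
  have "(\<lambda>\<gamma>. \<integral>\<^sup>+y. indicator A (\<gamma>,y) \<partial>G \<gamma>) \<in> borel_measurable NI"
    by (rule mcong[OF _ m]) (simp add: e)
  moreover have "(\<integral>\<^sup>+\<gamma>. (\<integral>\<^sup>+y. indicator A (\<gamma>,y) \<partial>G \<gamma>) \<partial>NI) = (\<integral>\<^sup>+\<gamma>. emeasure (G \<gamma>) (slice A \<gamma>) \<partial>NI)"
    by (rule nn_integral_cong) (use e in auto)
  moreover have "emeasure \<mu> A = (\<integral>\<^sup>+\<gamma>. emeasure (G \<gamma>) (slice A \<gamma>) \<partial>NI)"
    using R set unfolding restrictions_def by (auto simp: nn_integral_restrict_space[OF I_sets] mult.commute)
  ultimately show ?case using set by simp
next
  case (mult u c)
  have e: "(\<integral>\<^sup>+y. c * u (\<gamma>,y) \<partial>G \<gamma>) = c * (\<integral>\<^sup>+y. u (\<gamma>,y) \<partial>G \<gamma>)" if "\<gamma> \<in> space NI" for \<gamma>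
  proof -
    have gI: "\<gamma> \<in> I_int" using that by (simp add: space_restrict_space)
    have f: "fin_meas_I (G \<gamma>)" using R gI unfolding restrictions_def by auto
    show ?thesis
      by (rule nn_integral_cmult) (rule measurable_compose[OF meas_pair[OF f gI sm] mult(2)])
  qed
  have "(\<lambda>\<gamma>. \<integral>\<^sup>+y. c * u (\<gamma>,y) \<partial>G \<gamma>) \<in> borel_measurable NI"
    by (rule mcong[OF _ borel_measurable_times_ennreal[OF measurable_const mult(4)[THEN conjunct1]]]) (simp_all add: e)
  moreover have "(\<integral>\<^sup>+\<gamma>. (\<integral>\<^sup>+y. c * u (\<gamma>,y) \<partial>G \<gamma>) \<partial>NI) = (\<integral>\<^sup>+\<gamma>. c * (\<integral>\<^sup>+y. u (\<gamma>,y) \<partial>G \<gamma>) \<partial>NI)"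
    by (rule nn_integral_cong) (use e in auto)
  moreover have "(\<integral>\<^sup>+z. c * u z \<partial>\<mu>) = c * (\<integral>\<^sup>+z. u z \<partial>\<mu>)" using mult(2) by (rule nn_integral_cmult)
  ultimately show ?case using mult(4) by (simp add: nn_integral_cmult)
next
  case (add u v)
  have a: "(\<lambda>\<gamma>. \<integral>\<^sup>+y. v (\<gamma>,y) \<partial>G \<gamma>) \<in> borel_measurable NI" "(\<lambda>\<gamma>. \<integral>\<^sup>+y. u (\<gamma>,y) \<partial>G \<gamma>) \<in> borel_measurable NI"
    and ia: "(\<integral>\<^sup>+z. v z \<partial>\<mu>) = (\<integral>\<^sup>+\<gamma>. (\<integral>\<^sup>+y. v (\<gamma>,y) \<partial>G \<gamma>) \<partial>NI)"
            "(\<integral>\<^sup>+z. u z \<partial>\<mu>) = (\<integral>\<^sup>+\<gamma>. (\<integral>\<^sup>+y. u (\<gamma>,y) \<partial>G \<gamma>) \<partial>NI)"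
    and mu: "u \<in> borel_measurable \<mu>" "v \<in> borel_measurable \<mu>"
    using add by blast+
  have e: "(\<integral>\<^sup>+y. v (\<gamma>,y) + u (\<gamma>,y) \<partial>G \<gamma>) = (\<integral>\<^sup>+y. v (\<gamma>,y) \<partial>G \<gamma>) + (\<integral>\<^sup>+y. u (\<gamma>,y) \<partial>G \<gamma>)" if "\<gamma> \<in> space NI" for \<gamma>
  proof -
    have gI: "\<gamma> \<in> I_int" using that by (simp add: space_restrict_space)
    have f: "fin_meas_I (G \<gamma>)" using R gI unfolding restrictions_def by auto
    show ?thesis
      by (rule nn_integral_add) (auto intro: measurable_compose[OF meas_pair[OF f gI sm]] mu)
  qed
  have "(\<lambda>\<gamma>. \<integral>\<^sup>+y. v (\<gamma>,y) + u (\<gamma>,y) \<partial>G \<gamma>) \<in> borel_measurable NI"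
    by (rule mcong[OF _ borel_measurable_add[OF a]]) (simp add: e)
  moreover have "(\<integral>\<^sup>+\<gamma>. (\<integral>\<^sup>+y. v (\<gamma>,y) + u (\<gamma>,y) \<partial>G \<gamma>) \<partial>NI) = (\<integral>\<^sup>+\<gamma>. (\<integral>\<^sup>+y. v (\<gamma>,y) \<partial>G \<gamma>) + (\<integral>\<^sup>+y. u (\<gamma>,y) \<partial>G \<gamma>) \<partial>NI)"
    by (rule nn_integral_cong) (use e in auto)
  moreover have "(\<integral>\<^sup>+z. v z + u z \<partial>\<mu>) = (\<integral>\<^sup>+z. v z \<partial>\<mu>) + (\<integral>\<^sup>+z. u z \<partial>\<mu>)"
    by (rule nn_integral_add) (use mu in auto)
  moreover have "(\<integral>\<^sup>+\<gamma>. (\<integral>\<^sup>+y. v (\<gamma>,y) \<partial>G \<gamma>) + (\<integral>\<^sup>+y. u (\<gamma>,y) \<partial>G \<gamma>) \<partial>NI)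
     = (\<integral>\<^sup>+\<gamma>. (\<integral>\<^sup>+y. v (\<gamma>,y) \<partial>G \<gamma>) \<partial>NI) + (\<integral>\<^sup>+\<gamma>. (\<integral>\<^sup>+y. u (\<gamma>,y) \<partial>G \<gamma>) \<partial>NI)"
    by (rule nn_integral_add) (use a in auto)
  ultimately show ?case using ia by simp
next
  case (seq U)
  have incU: "incseq U" using seq by blast
  have mU: "\<And>i. (\<lambda>\<gamma>. \<integral>\<^sup>+y. U i (\<gamma>,y) \<partial>G \<gamma>) \<in> borel_measurable NI"
    and iU: "\<And>i. (\<integral>\<^sup>+z. U i z \<partial>\<mu>) = (\<integral>\<^sup>+\<gamma>. (\<integral>\<^sup>+y. U i (\<gamma>,y) \<partial>G \<gamma>) \<partial>NI)"
    and mmU: "\<And>i. U i \<in> borel_measurable \<mu>"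
    using seq by blast+
  have e: "(\<integral>\<^sup>+y. (SUP i. U i) (\<gamma>,y) \<partial>G \<gamma>) = (SUP i. \<integral>\<^sup>+y. U i (\<gamma>,y) \<partial>G \<gamma>)" if "\<gamma> \<in> space NI" for \<gamma>
  proof -
    have gI: "\<gamma> \<in> I_int" using that by (simp add: space_restrict_space)
    have f: "fin_meas_I (G \<gamma>)" using R gI unfolding restrictions_def by auto
    have "(\<integral>\<^sup>+y. (SUP i. U i (\<gamma>,y)) \<partial>G \<gamma>) = (SUP i. \<integral>\<^sup>+y. U i (\<gamma>,y) \<partial>G \<gamma>)"
      by (rule nn_integral_monotone_convergence_SUP)
        (use incU in \<open>auto simp: incseq_def le_fun_def intro: measurable_compose[OF meas_pair[OF f gI sm]] seq\<close>)
    then show ?thesis by (simp add: image_comp)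
  qed
  have inc: "incseq (\<lambda>i \<gamma>. \<integral>\<^sup>+y. U i (\<gamma>,y) \<partial>G \<gamma>)"
    using incU by (auto simp: incseq_def le_fun_def intro!: nn_integral_mono)
  have "(\<lambda>\<gamma>. \<integral>\<^sup>+y. (SUP i. U i) (\<gamma>,y) \<partial>G \<gamma>) \<in> borel_measurable NI"
    by (rule mcong[OF _ borel_measurable_SUP[of UNIV "\<lambda>i \<gamma>. \<integral>\<^sup>+y. U i (\<gamma>,y) \<partial>G \<gamma>"]]) (use e mU in auto)
  moreover have "(\<integral>\<^sup>+\<gamma>. (\<integral>\<^sup>+y. (SUP i. U i) (\<gamma>,y) \<partial>G \<gamma>) \<partial>NI) = (\<integral>\<^sup>+\<gamma>. (SUP i. \<integral>\<^sup>+y. U i (\<gamma>,y) \<partial>G \<gamma>) \<partial>NI)"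
    by (rule nn_integral_cong) (use e in auto)
  moreover have "(\<integral>\<^sup>+\<gamma>. (SUP i. \<integral>\<^sup>+y. U i (\<gamma>,y) \<partial>G \<gamma>) \<partial>NI) = (SUP i. \<integral>\<^sup>+\<gamma>. (\<integral>\<^sup>+y. U i (\<gamma>,y) \<partial>G \<gamma>) \<partial>NI)"
    by (rule nn_integral_monotone_convergence_SUP) (use inc mU in auto)
  moreover have "(\<integral>\<^sup>+z. (SUP i. U i) z \<partial>\<mu>) = (SUP i. \<integral>\<^sup>+z. U i z \<partial>\<mu>)"
    using mmU incU by (simp add: nn_integral_monotone_convergence_SUP image_comp)
  ultimately show ?case using iU by simp
qed



lemma fin_G: "restrictions \<mu> G \<Longrightarrow> \<gamma> \<in> I_int \<Longrightarrow> fin_meas_I (G \<gamma>)"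
  unfolding restrictions_def by auto

lemma slice_sets:
  assumes A: "A \<in> sets (restrict_space borel Sq)" and f: "fin_meas_I M" and gI: "\<gamma> \<in> I_int"
  shows "slice A \<gamma> \<in> sets M"
proof -
  have "A \<subseteq> Sq" using sets.sets_into_space[OF A] by (simp add: space_restrict_space)
  then have "slice A \<gamma> = (\<lambda>y. (\<gamma>, y)) -` A \<inter> space M"
    using space_GI[OF f] by (auto simp: slice_def Sq_def)
  then show ?thesis
    using measurable_sets[OF meas_pair[OF f gI refl] A] by simp
qed

lemma fin_dens:
  assumes f: "fin_meas_I M" and q: "q \<in> borel_measurable M" and b: "\<forall>y\<in>space M. q y \<le> L"
  shows "fin_meas_I (density M (\<lambda>y. ennreal (q y)))"
proof -
  interpret finite_measure M using f unfolding fin_meas_I_def by auto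
  have "emeasure (density M (\<lambda>y. ennreal (q y))) (space M) = (\<integral>\<^sup>+y. ennreal (q y) * indicator (space M) y \<partial>M)"
    using q by (intro emeasure_density) auto
  also have "\<dots> \<le> (\<integral>\<^sup>+y. ennreal L \<partial>M)"
    using b by (intro nn_integral_mono) (auto intro: ennreal_leI)
  also have "\<dots> = ennreal L * emeasure M (space M)" by simp
  also have "\<dots> < \<infinity>" using emeasure_finite[of "space M"] by (simp add: ennreal_mult_eq_top_iff less_top[symmetric])
  finally show ?thesis using f unfolding fin_meas_I_def
    by (auto intro!: finite_measureI)
qed

lemma part1_one:
  assumes sm: "sets \<mu> = sets (restrict_space borel Sq)" and R: "restrictions \<mu> G"
    and P: "prob_space \<mu>"
    and q: "q \<in> borel_measurable (restrict_space borel Sq)" and qb: "\<forall>z\<in>Sq. 0 \<le> q z \<and> q z \<le> L"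
    and A: "A \<in> sets (restrict_space borel Sq)"
  shows "integrable NI (\<lambda>\<gamma>. measure (density (G \<gamma>) (\<lambda>y. ennreal (q (\<gamma>,y)))) (slice A \<gamma>))"
    and "integral\<^sup>L NI (\<lambda>\<gamma>. measure (density (G \<gamma>) (\<lambda>y. ennreal (q (\<gamma>,y)))) (slice A \<gamma>))
          = (\<integral>z. indicator A z * q z \<partial>\<mu>)"
    and "integrable \<mu> (\<lambda>z. indicator A z * q z)"
proof -
  interpret prob_space \<mu> by fact
  have sp: "space \<mu> = Sq" by (rule space_mu[OF sm])
  have qm: "q \<in> borel_measurable \<mu>" using q measurable_cong_sets[OF sm refl] by blast
  have Am: "A \<in> sets \<mu>" using A sm by simp
  define h where "h z = indicator A z * q z" for z
  have hm: "h \<in> borel_measurable \<mu>" unfolding h_def using qm Am by measurable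
  have hb: "z \<in> Sq \<Longrightarrow> 0 \<le> h z \<and> h z \<le> L" for z using qb by (auto simp: h_def indicator_def)
  define \<Phi> where "\<Phi> \<gamma> = (\<integral>\<^sup>+y. ennreal (h (\<gamma>,y)) \<partial>G \<gamma>)" for \<gamma>
  have D: "\<Phi> \<in> borel_measurable NI \<and> (\<integral>\<^sup>+z. ennreal (h z) \<partial>\<mu>) = (\<integral>\<^sup>+\<gamma>. \<Phi> \<gamma> \<partial>NI)"
    unfolding \<Phi>_def by (rule disint[OF sm R]) (use hm in measurable)
  have fin: "\<Phi> \<gamma> < \<infinity>" and meq: "measure (density (G \<gamma>) (\<lambda>y. ennreal (q (\<gamma>,y)))) (slice A \<gamma>) = enn2real (\<Phi> \<gamma>)"
    if gI: "\<gamma> \<in> I_int" for \<gamma>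
  proof -
    have f: "fin_meas_I (G \<gamma>)" by (rule fin_G[OF R gI])
    interpret G: finite_measure "G \<gamma>" using f unfolding fin_meas_I_def by auto
    have qg: "(\<lambda>y. ennreal (q (\<gamma>,y))) \<in> borel_measurable (G \<gamma>)"
      using measurable_compose[OF meas_pair[OF f gI sm] qm] by measurable
    have "emeasure (density (G \<gamma>) (\<lambda>y. ennreal (q (\<gamma>,y)))) (slice A \<gamma>) = (\<integral>\<^sup>+y. ennreal (q (\<gamma>,y)) * indicator (slice A \<gamma>) y \<partial>G \<gamma>)"
      by (rule emeasure_density[OF qg slice_sets[OF A f gI]])
    also have "\<dots> = \<Phi> \<gamma>" unfolding \<Phi>_def h_def
      by (intro nn_integral_cong) (auto simp: slice_def indicator_def)
    finally have e: "emeasure (density (G \<gamma>) (\<lambda>y. ennreal (q (\<gamma>,y)))) (slice A \<gamma>) = \<Phi> \<gamma>" .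
    have "\<Phi> \<gamma> \<le> (\<integral>\<^sup>+y. ennreal L \<partial>G \<gamma>)" unfolding \<Phi>_def
      using hb gI space_GI[OF f] by (intro nn_integral_mono) (auto simp: Sq_def intro: ennreal_leI)
    also have "\<dots> < \<infinity>" using G.emeasure_finite[of "space (G \<gamma>)"] by (simp add: ennreal_mult_eq_top_iff less_top[symmetric])
    finally show "\<Phi> \<gamma> < \<infinity>" .
    show "measure (density (G \<gamma>) (\<lambda>y. ennreal (q (\<gamma>,y)))) (slice A \<gamma>) = enn2real (\<Phi> \<gamma>)"
      unfolding measure_def e ..
  qed
  have Dm: "(\<lambda>\<gamma>. enn2real (\<Phi> \<gamma>)) \<in> borel_measurable NI" using D by (intro borel_measurable_enn2real) auto
  have nn: "(\<integral>\<^sup>+\<gamma>. ennreal (enn2real (\<Phi> \<gamma>)) \<partial>NI) = (\<integral>\<^sup>+\<gamma>. \<Phi> \<gamma> \<partial>NI)"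
    by (intro nn_integral_cong) (use fin in \<open>auto simp: space_restrict_space\<close>)
  have "(\<integral>\<^sup>+z. ennreal (h z) \<partial>\<mu>) \<le> (\<integral>\<^sup>+z. ennreal L \<partial>\<mu>)"
    using hb sp by (intro nn_integral_mono) (auto intro: ennreal_leI)
  also have "\<dots> < \<infinity>" by (simp add: emeasure_space_1)
  finally have hfin: "(\<integral>\<^sup>+z. ennreal (h z) \<partial>\<mu>) < \<infinity>" .
  have int1: "integrable NI (\<lambda>\<gamma>. enn2real (\<Phi> \<gamma>))"
    by (rule integrableI_nonneg[OF Dm]) (use nn D hfin in auto)
  have mcong': "(\<lambda>\<gamma>. measure (density (G \<gamma>) (\<lambda>y. ennreal (q (\<gamma>,y)))) (slice A \<gamma>)) x = enn2real (\<Phi> x)"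
    if "x \<in> space NI" for x using meq that by (simp add: space_restrict_space)
  show "integrable NI (\<lambda>\<gamma>. measure (density (G \<gamma>) (\<lambda>y. ennreal (q (\<gamma>,y)))) (slice A \<gamma>))"
    by (rule Bochner_Integration.integrable_cong[OF refl, where g="\<lambda>\<gamma>. enn2real (\<Phi> \<gamma>)", THEN iffD2]) (use mcong' int1 in auto)
  have "integral\<^sup>L NI (\<lambda>\<gamma>. measure (density (G \<gamma>) (\<lambda>y. ennreal (q (\<gamma>,y)))) (slice A \<gamma>))
      = integral\<^sup>L NI (\<lambda>\<gamma>. enn2real (\<Phi> \<gamma>))"
    by (rule Bochner_Integration.integral_cong[OF refl mcong'])
  also have "\<dots> = enn2real (\<integral>\<^sup>+\<gamma>. \<Phi> \<gamma> \<partial>NI)"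
    using integral_eq_nn_integral[OF Dm] nn by simp
  also have "\<dots> = enn2real (\<integral>\<^sup>+z. ennreal (h z) \<partial>\<mu>)" using D by simp
  also have "\<dots> = (\<integral>z. h z \<partial>\<mu>)"
  proof -
    have "AE x in \<mu>. 0 \<le> h x" using hb sp by (intro AE_I2) auto
    then show ?thesis using integral_eq_nn_integral[OF hm] by simp
  qed
  finally show "integral\<^sup>L NI (\<lambda>\<gamma>. measure (density (G \<gamma>) (\<lambda>y. ennreal (q (\<gamma>,y)))) (slice A \<gamma>))
          = (\<integral>z. indicator A z * q z \<partial>\<mu>)" unfolding h_def .
  show "integrable \<mu> (\<lambda>z. indicator A z * q z)"
  proof (rule integrable_const_bound[of _ L])
    show "AE x in \<mu>. norm (indicator A x * q x) \<le> L"
      using hb sp by (intro AE_I2) (force simp: h_def)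
  qed (use hm[unfolded h_def] in \<open>simp add: h_def\<close>)
qed



definition Gs :: "(real \<Rightarrow> real measure) \<Rightarrow> (real \<times> real \<Rightarrow> real) \<Rightarrow> real \<Rightarrow> real measure \<times> real measure" where
  "Gs G f \<gamma> = (density (G \<gamma>) (\<lambda>y. ennreal (max 0 (f (\<gamma>,y)))), density (G \<gamma>) (\<lambda>y. ennreal (max 0 (- f (\<gamma>,y)))))"

lemma part1:
  assumes sm: "sets \<mu> = sets (restrict_space borel Sq)" and R: "restrictions \<mu> G"
    and P: "prob_space \<mu>"
    and lip: "L-lipschitz_on Sq f" and bnd: "\<forall>z\<in>Sq. \<bar>f z\<bar> \<le> L"
  shows "restrictions_signed (dens \<mu> f) (Gs G f)"
proof -
  have fm: "f \<in> borel_measurable (restrict_space borel Sq)"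
    by (rule borel_measurable_continuous_on_restrict[OF lipschitz_on_continuous_on[OF lip]])
  define qp where "qp z = max 0 (f z)" for z
  define qm where "qm z = max 0 (- f z)" for z
  have qpm: "qp \<in> borel_measurable (restrict_space borel Sq)" unfolding qp_def using fm by (intro borel_measurable_max measurable_const) auto
  have qmm: "qm \<in> borel_measurable (restrict_space borel Sq)" unfolding qm_def using fm by (intro borel_measurable_max measurable_const borel_measurable_uminus) auto
  have qpb: "\<forall>z\<in>Sq. 0 \<le> qp z \<and> qp z \<le> L" using bnd by (auto simp: qp_def)
  have qmb: "\<forall>z\<in>Sq. 0 \<le> qm z \<and> qm z \<le> L" using bnd by (auto simp: qm_def)
  have fin: "fin_meas_I (density (G \<gamma>) (\<lambda>y. ennreal (q (\<gamma>,y))))"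
    if gI: "\<gamma> \<in> I_int" and q: "q \<in> borel_measurable (restrict_space borel Sq)"
      and qb: "\<forall>z\<in>Sq. 0 \<le> q z \<and> q z \<le> L" for \<gamma> q
  proof -
    have f: "fin_meas_I (G \<gamma>)" by (rule fin_G[OF R gI])
    show ?thesis
    proof (rule fin_dens[OF f])
      show "(\<lambda>y. q (\<gamma>, y)) \<in> borel_measurable (G \<gamma>)"
        using measurable_compose[OF meas_pair[OF f gI refl] q] .
      show "\<forall>y\<in>space (G \<gamma>). q (\<gamma>, y) \<le> L" using qb gI space_GI[OF f] by (auto simp: Sq_def)
    qed
  qed
  show ?thesis
    unfolding restrictions_signed_def
  proof (intro conjI ballI)
    fix \<gamma> assume "\<gamma> \<in> I_int"
    then show "fin_meas_I (fst (Gs G f \<gamma>))" "fin_meas_I (snd (Gs G f \<gamma>))"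
      using fin[OF _ qpm qpb] fin[OF _ qmm qmb] unfolding Gs_def qp_def qm_def by simp_all
  next
    fix A assume A: "A \<in> sets (restrict_space borel Sq)"
    note p = part1_one[OF sm R P qpm qpb A]
    note m = part1_one[OF sm R P qmm qmb A]
    let ?F = "\<lambda>\<gamma>. measure (fst (Gs G f \<gamma>)) (slice A \<gamma>) - measure (snd (Gs G f \<gamma>)) (slice A \<gamma>)"
    have intF: "integrable NI ?F"
      using Bochner_Integration.integrable_diff[OF p(1) m(1)] unfolding Gs_def qp_def qm_def fst_conv snd_conv .
    show "set_integrable lborel I_int ?F"
      unfolding set_integrable_def using integrable_restrict_space[OF I_sets, THEN iffD1, OF intF] .
    have "dens \<mu> f A = (\<integral>z. indicator A z * qp z - indicator A z * qm z \<partial>\<mu>)"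
      unfolding dens_def set_lebesgue_integral_def
      by (intro Bochner_Integration.integral_cong) (auto simp: qp_def qm_def indicator_def)
    also have "\<dots> = (\<integral>z. indicator A z * qp z \<partial>\<mu>) - (\<integral>z. indicator A z * qm z \<partial>\<mu>)"
      by (rule Bochner_Integration.integral_diff[OF p(3) m(3)])
    also have "\<dots> = integral\<^sup>L NI ?F"
      using p(2) m(2) Bochner_Integration.integral_diff[OF p(1) m(1)] by (simp add: Gs_def qp_def qm_def)
    also have "\<dots> = (LINT \<gamma>:I_int|lborel. ?F \<gamma>)"
      unfolding set_lebesgue_integral_def by (rule integral_restrict_space[OF I_sets])
    finally show "dens \<mu> f A = (LINT \<gamma>:I_int|lborel. ?F \<gamma>)" .
  qed
qed



lemma sint_null: "sint (M, null_measure M) g = (\<integral>y. g y \<partial>M)"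
  by (simp add: sint_def)

lemma lip_meas:
  assumes f: "fin_meas_I M" and g: "c-lipschitz_on I_int g"
  shows "g \<in> borel_measurable M"
  using borel_measurable_continuous_on_restrict[OF lipschitz_on_continuous_on[OF g]]
    measurable_cong_sets[of "restrict_space borel I_int" M borel borel] f
  unfolding fin_meas_I_def by auto

lemma int_bound:
  assumes f: "fin_meas_I M" and gm: "g \<in> borel_measurable M" and b: "\<forall>y\<in>I_int. \<bar>g y\<bar> \<le> c"
  shows "\<bar>\<integral>y. g y \<partial>M\<bar> \<le> c * measure M I_int" and "integrable M g"
proof -
  interpret finite_measure M using f unfolding fin_meas_I_def by auto
  show ig: "integrable M g"
    using b space_GI[OF f] by (intro integrable_const_bound[of _ c] gm) auto
  have "\<bar>\<integral>y. g y \<partial>M\<bar> \<le> (\<integral>y. c \<partial>M)"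
    using b space_GI[OF f] by (intro integral_abs_bound_integral ig) auto
  then show "\<bar>\<integral>y. g y \<partial>M\<bar> \<le> c * measure M I_int"
    using space_GI[OF f] by (simp add: mult.commute)
qed

lemma W10_ge:
  assumes f: "fin_meas_I M" and f': "fin_meas_I M'"
    and h: "c-lipschitz_on I_int h" and hb: "\<forall>y\<in>I_int. \<bar>h y\<bar> \<le> c"
  shows "\<bar>(\<integral>y. h y \<partial>M) - (\<integral>y. h y \<partial>M')\<bar> \<le> c * W10 (M, null_measure M) (M', null_measure M')"
proof (cases "c = 0")
  case True
  have "(\<integral>y. h y \<partial>M) = 0" "(\<integral>y. h y \<partial>M') = 0"
    using int_bound(1)[OF f lip_meas[OF f h] hb] int_bound(1)[OF f' lip_meas[OF f' h] hb] True by auto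
  then show ?thesis using True by simp
next
  case False
  then have c: "c > 0" using h unfolding lipschitz_on_def by auto
  define S where "S = {\<bar>sint (M, null_measure M) g - sint (M', null_measure M') g\<bar> | g.
                      1-lipschitz_on I_int g \<and> (\<forall>y\<in>I_int. \<bar>g y\<bar> \<le> 1)}"
  have W: "W10 (M, null_measure M) (M', null_measure M') = Sup S" unfolding W10_def S_def ..
  have bdd: "bdd_above S"
  proof (rule bdd_aboveI)
    fix s assume "s \<in> S"
    then obtain g where g: "1-lipschitz_on I_int g" "\<forall>y\<in>I_int. \<bar>g y\<bar> \<le> 1"
      and s: "s = \<bar>(\<integral>y. g y \<partial>M) - (\<integral>y. g y \<partial>M')\<bar>" unfolding S_def sint_null by auto
    show "s \<le> 1 * measure M I_int + 1 * measure M' I_int"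
      using int_bound(1)[OF f lip_meas[OF f g(1)] g(2)] int_bound(1)[OF f' lip_meas[OF f' g(1)] g(2)] s
      by linarith
  qed
  define g where "g y = h y / c" for y
  have g1: "1-lipschitz_on I_int g"
    using h c unfolding lipschitz_on_def g_def dist_real_def
    by (auto simp: diff_divide_distrib[symmetric] divide_le_eq mult.commute)
  have g2: "\<forall>y\<in>I_int. \<bar>g y\<bar> \<le> 1" using hb c by (auto simp: g_def divide_le_eq)
  have "\<bar>(\<integral>y. g y \<partial>M) - (\<integral>y. g y \<partial>M')\<bar> \<in> S"
    unfolding S_def sint_null using g1 g2 by blast
  then have le: "\<bar>(\<integral>y. g y \<partial>M) - (\<integral>y. g y \<partial>M')\<bar> \<le> Sup S" by (rule cSup_upper[OF _ bdd])
  have "(\<integral>y. h y \<partial>M) = c * (\<integral>y. g y \<partial>M)" "(\<integral>y. h y \<partial>M') = c * (\<integral>y. g y \<partial>M')"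
    using c by (simp_all add: g_def)
  then have "\<bar>(\<integral>y. h y \<partial>M) - (\<integral>y. h y \<partial>M')\<bar> = c * \<bar>(\<integral>y. g y \<partial>M) - (\<integral>y. g y \<partial>M')\<bar>"
    using c by (simp add: right_diff_distrib[symmetric] abs_mult)
  also have "\<dots> \<le> c * Sup S" using le c by simp
  finally show ?thesis using W by simp
qed



lemma Var_list:
  assumes "Var G \<le> ereal K" "sorted_wrt (<) xs" "set xs \<subseteq> I_int"
  shows "(\<Sum>i<length xs - 1. W10 (G (xs ! i)) (G (xs ! Suc i))) \<le> K"
  using assms unfolding Var_def by (auto simp: SUP_le_iff)

lemma K_nonneg: "Var G \<le> ereal K \<Longrightarrow> 0 \<le> K"
  using Var_list[of G K "[]"] by simp

lemma W_pair:
  assumes "Var G \<le> ereal K" "a < b" "a \<in> I_int" "b \<in> I_int"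
  shows "W10 (G a) (G b) \<le> K"
  using Var_list[of G K "[a,b]"] assms by simp

lemma mass_diff:
  assumes R: "restrictions \<mu> G" and V: "Var (\<lambda>\<gamma>. (G \<gamma>, null_measure (G \<gamma>))) \<le> ereal K"
    and gI: "\<gamma> \<in> I_int" and gI': "\<gamma>' \<in> I_int"
  shows "measure (G \<gamma>) I_int \<le> measure (G \<gamma>') I_int + K"
proof -
  have f: "fin_meas_I (G \<gamma>)" "fin_meas_I (G \<gamma>')" using fin_G[OF R] gI gI' by auto
  have l: "1-lipschitz_on I_int (\<lambda>_. 1::real)" by (simp add: lipschitz_on_def)
  have i1: "(\<integral>y. 1 \<partial>G x) = measure (G x) I_int" if "fin_meas_I (G x)" for x
    using space_GI[OF that] by simp
  consider "\<gamma> = \<gamma>'" | "\<gamma> < \<gamma>'" | "\<gamma>' < \<gamma>" by linarith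
  then show ?thesis
  proof cases
    case 1 then show ?thesis using K_nonneg[OF V] by simp
  next
    case 2
    have "\<bar>(\<integral>y. 1 \<partial>G \<gamma>) - (\<integral>y. 1 \<partial>G \<gamma>')\<bar> \<le> 1 * W10 (G \<gamma>, null_measure (G \<gamma>)) (G \<gamma>', null_measure (G \<gamma>'))"
      by (rule W10_ge[OF f l]) simp
    also have "\<dots> \<le> K" using W_pair[OF V 2 gI gI'] by simp
    finally show ?thesis using i1 f by simp
  next
    case 3
    have "\<bar>(\<integral>y. 1 \<partial>G \<gamma>') - (\<integral>y. 1 \<partial>G \<gamma>)\<bar> \<le> 1 * W10 (G \<gamma>', null_measure (G \<gamma>')) (G \<gamma>, null_measure (G \<gamma>))"
      by (rule W10_ge[OF f(2) f(1) l]) simp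
    also have "\<dots> \<le> K" using W_pair[OF V 3 gI' gI] by simp
    finally show ?thesis using i1 f by simp
  qed
qed

lemma mass_bound:
  assumes sm: "sets \<mu> = sets (restrict_space borel Sq)" and R: "restrictions \<mu> G"
    and P: "prob_space \<mu>"
    and V: "Var (\<lambda>\<gamma>. (G \<gamma>, null_measure (G \<gamma>))) \<le> ereal K" and gI: "\<gamma> \<in> I_int"
  shows "measure (G \<gamma>) I_int \<le> 1 + K"
proof -
  interpret prob_space \<mu> by fact
  have D: "(\<integral>\<^sup>+z. 1 \<partial>\<mu>) = (\<integral>\<^sup>+\<gamma>'. (\<integral>\<^sup>+y. 1 \<partial>G \<gamma>') \<partial>NI)"
    using disint[OF sm R, of "\<lambda>_. 1"] by simp
  have sNI: "space NI = I_int" by (simp add: space_restrict_space)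
  have "ennreal (measure (G \<gamma>) I_int - K) * emeasure NI (space NI) = (\<integral>\<^sup>+\<gamma>'. ennreal (measure (G \<gamma>) I_int - K) \<partial>NI)"
    by simp
  also have "\<dots> \<le> (\<integral>\<^sup>+\<gamma>'. (\<integral>\<^sup>+y. 1 \<partial>G \<gamma>') \<partial>NI)"
  proof (rule nn_integral_mono)
    fix x assume "x \<in> space NI"
    then have xI: "x \<in> I_int" using sNI by simp
    have f: "fin_meas_I (G x)" by (rule fin_G[OF R xI])
    interpret finite_measure "G x" using f unfolding fin_meas_I_def by auto
    have "(\<integral>\<^sup>+y. 1 \<partial>G x) = ennreal (measure (G x) I_int)"
      using space_GI[OF f] by (simp add: emeasure_eq_measure)
    then show "ennreal (measure (G \<gamma>) I_int - K) \<le> (\<integral>\<^sup>+y. 1 \<partial>G x)"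
      using mass_diff[OF R V gI xI] by (simp add: ennreal_leI)
  qed
  also have "\<dots> = 1" using D by (simp add: emeasure_space_1)
  finally have "ennreal (measure (G \<gamma>) I_int - K) * emeasure NI (space NI) \<le> 1" .
  moreover have "emeasure NI (space NI) = 1"
    using sNI emeasure_restrict_space[OF I_sets, of I_int] by (simp add: I_int_def)
  ultimately show ?thesis by simp
qed



lemma dist_slice: "dist (a::real, x::real) (a, y) = \<bar>x - y\<bar>"
  by (simp add: dist_Pair_Pair dist_real_def)

lemma dist_slice2: "dist (a::real, x::real) (b, x) = \<bar>a - b\<bar>"
  by (simp add: dist_Pair_Pair dist_real_def)

lemma aux_mb: "0 \<le> a \<Longrightarrow> a \<le> L \<Longrightarrow> \<bar>b\<bar> \<le> 1 \<Longrightarrow> \<bar>a * b\<bar> \<le> (L::real)"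
  by (simp add: abs_mult) (metis abs_ge_zero mult_left_le order_trans)

lemma sint_Gs:
  assumes R: "restrictions \<mu> G" and gI: "\<gamma> \<in> I_int"
    and lip: "L-lipschitz_on Sq f" and bnd: "\<forall>z\<in>Sq. \<bar>f z\<bar> \<le> L"
    and g: "1-lipschitz_on I_int g" "\<forall>y\<in>I_int. \<bar>g y\<bar> \<le> 1"
  shows "sint (Gs G f \<gamma>) g = (\<integral>y. f (\<gamma>,y) * g y \<partial>G \<gamma>)"
proof -
  have f: "fin_meas_I (G \<gamma>)" by (rule fin_G[OF R gI])
  have fm: "f \<in> borel_measurable (restrict_space borel Sq)"
    by (rule borel_measurable_continuous_on_restrict[OF lipschitz_on_continuous_on[OF lip]])
  have fg: "(\<lambda>y. f (\<gamma>, y)) \<in> borel_measurable (G \<gamma>)"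
    using measurable_compose[OF meas_pair[OF f gI refl] fm] .
  have gm: "g \<in> borel_measurable (G \<gamma>)" by (rule lip_meas[OF f g(1)])
  have b: "\<forall>y\<in>I_int. \<bar>f (\<gamma>,y)\<bar> \<le> L" using bnd gI by (auto simp: Sq_def)
  have L0: "0 \<le> L" using lip by (simp add: lipschitz_on_def)
  have m1: "(\<lambda>y. max 0 (f (\<gamma>,y)) * g y) \<in> borel_measurable (G \<gamma>)"
    by (intro borel_measurable_times borel_measurable_max measurable_const fg gm) auto
  have m2: "(\<lambda>y. max 0 (- f (\<gamma>,y)) * g y) \<in> borel_measurable (G \<gamma>)"
    by (intro borel_measurable_times borel_measurable_max measurable_const fg gm borel_measurable_uminus) auto
  have ip: "integrable (G \<gamma>) (\<lambda>y. max 0 (f (\<gamma>,y)) * g y)"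
    using b g(2) using L0 by (intro int_bound(2)[OF f m1, of L] ballI aux_mb) (auto simp: abs_le_iff)
  have im: "integrable (G \<gamma>) (\<lambda>y. max 0 (- f (\<gamma>,y)) * g y)"
    using b g(2) using L0 by (intro int_bound(2)[OF f m2, of L] ballI aux_mb) (auto simp: abs_le_iff)
  have "sint (Gs G f \<gamma>) g = (\<integral>y. max 0 (f (\<gamma>,y)) * g y \<partial>G \<gamma>) - (\<integral>y. max 0 (- f (\<gamma>,y)) * g y \<partial>G \<gamma>)"
    unfolding sint_def Gs_def fst_conv snd_conv
    by (subst (1 2) integral_density) (auto intro!: gm fg borel_measurable_max measurable_const borel_measurable_uminus)
  also have "\<dots> = (\<integral>y. max 0 (f (\<gamma>,y)) * g y - max 0 (- f (\<gamma>,y)) * g y \<partial>G \<gamma>)"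
    by (rule Bochner_Integration.integral_diff[OF ip im, symmetric])
  also have "\<dots> = (\<integral>y. f (\<gamma>,y) * g y \<partial>G \<gamma>)"
    by (intro Bochner_Integration.integral_cong) (simp_all add: left_diff_distrib[symmetric] max_def)
  finally show ?thesis .
qed



lemma W10_Gs:
  assumes sm: "sets \<mu> = sets (restrict_space borel Sq)" and R: "restrictions \<mu> G"
    and P: "prob_space \<mu>"
    and V: "Var (\<lambda>\<gamma>. (G \<gamma>, null_measure (G \<gamma>))) \<le> ereal K"
    and lip: "L-lipschitz_on Sq f" and bnd: "\<forall>z\<in>Sq. \<bar>f z\<bar> \<le> L"
    and gI: "\<gamma> \<in> I_int" and gI': "\<gamma>' \<in> I_int"
  shows "W10 (Gs G f \<gamma>) (Gs G f \<gamma>') \<le> 2 * L * W10 (G \<gamma>, null_measure (G \<gamma>)) (G \<gamma>', null_measure (G \<gamma>')) + L * \<bar>\<gamma> - \<gamma>'\<bar> * (1 + K)"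
proof -
  have f: "fin_meas_I (G \<gamma>)" "fin_meas_I (G \<gamma>')" using fin_G[OF R] gI gI' by auto
  have L0: "0 \<le> L" using lip by (simp add: lipschitz_on_def)
  have fm: "f \<in> borel_measurable (restrict_space borel Sq)"
    by (rule borel_measurable_continuous_on_restrict[OF lipschitz_on_continuous_on[OF lip]])
  have fg: "(\<lambda>y. f (a, y)) \<in> borel_measurable (G \<gamma>')" if "a \<in> I_int" for a
    using measurable_compose[OF meas_pair[OF f(2) that refl] fm] .
  have flip: "\<bar>f (a,x) - f (b,y)\<bar> \<le> L * dist (a,x) (b,y)" if "a \<in> I_int" "b \<in> I_int" "x \<in> I_int" "y \<in> I_int" for a b x y
    using lip that unfolding lipschitz_on_def dist_real_def Sq_def by auto
  have fb: "\<bar>f (a,x)\<bar> \<le> L" if "a \<in> I_int" "x \<in> I_int" for a x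
    using bnd that unfolding Sq_def by auto
  have mass: "measure (G \<gamma>') I_int \<le> 1 + K" by (rule mass_bound[OF sm R P V gI'])
  let ?W = "W10 (G \<gamma>, null_measure (G \<gamma>)) (G \<gamma>', null_measure (G \<gamma>'))"
  show ?thesis
    unfolding W10_def[of "Gs G f \<gamma>"]
  proof (rule cSup_least)
    show "{\<bar>sint (Gs G f \<gamma>) g - sint (Gs G f \<gamma>') g\<bar> |g. 1-lipschitz_on I_int g \<and> (\<forall>y\<in>I_int. \<bar>g y\<bar> \<le> 1)} \<noteq> {}"
      by (rule ccontr) (auto simp: lipschitz_on_def elim!: allE[of _ "\<lambda>_. 0"])
  next
    fix s assume "s \<in> {\<bar>sint (Gs G f \<gamma>) g - sint (Gs G f \<gamma>') g\<bar> |g. 1-lipschitz_on I_int g \<and> (\<forall>y\<in>I_int. \<bar>g y\<bar> \<le> 1)}"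
    then obtain g where g: "1-lipschitz_on I_int g" "\<forall>y\<in>I_int. \<bar>g y\<bar> \<le> 1"
      and s: "s = \<bar>sint (Gs G f \<gamma>) g - sint (Gs G f \<gamma>') g\<bar>" by blast
    have gl: "\<bar>g x - g y\<bar> \<le> \<bar>x - y\<bar>" if "x \<in> I_int" "y \<in> I_int" for x y
      using g(1) that unfolding lipschitz_on_def dist_real_def by auto
    define h where "h y = f (\<gamma>,y) * g y" for y
    define k where "k y = f (\<gamma>',y) * g y" for y
    have s': "s = \<bar>(\<integral>y. h y \<partial>G \<gamma>) - (\<integral>y. k y \<partial>G \<gamma>')\<bar>"
      unfolding s h_def k_def sint_Gs[OF R gI lip bnd g] sint_Gs[OF R gI' lip bnd g] ..
    have hlip: "(2*L)-lipschitz_on I_int h"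
      unfolding lipschitz_on_def
    proof (intro conjI ballI)
      show "0 \<le> 2 * L" using L0 by simp
      fix x y assume xy: "x \<in> I_int" "y \<in> I_int"
      have "h x - h y = f (\<gamma>,x) * (g x - g y) + g y * (f (\<gamma>,x) - f (\<gamma>,y))"
        unfolding h_def by (simp add: algebra_simps)
      then have "\<bar>h x - h y\<bar> \<le> \<bar>f (\<gamma>,x)\<bar> * \<bar>g x - g y\<bar> + \<bar>g y\<bar> * \<bar>f (\<gamma>,x) - f (\<gamma>,y)\<bar>"
        by (simp add: abs_mult[symmetric] abs_triangle_ineq)
      also have "\<dots> \<le> L * \<bar>x - y\<bar> + 1 * (L * \<bar>x - y\<bar>)"
      proof (intro add_mono mult_mono)
        show "\<bar>f (\<gamma>,x) - f (\<gamma>,y)\<bar> \<le> L * \<bar>x - y\<bar>" using flip[OF gI gI xy] by (simp add: dist_slice)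
      qed (use fb[OF gI xy(1)] gl[OF xy] g(2) xy L0 in auto)
      finally show "dist (h x) (h y) \<le> 2 * L * dist x y" by (simp add: dist_real_def)
    qed
    have hb: "\<forall>y\<in>I_int. \<bar>h y\<bar> \<le> 2 * L"
    proof
      fix y assume y: "y \<in> I_int"
      have "\<bar>\<bar>f (\<gamma>,y)\<bar> * g y\<bar> \<le> L" using fb[OF gI y] g(2) y by (intro aux_mb) auto
      then show "\<bar>h y\<bar> \<le> 2 * L" using L0 by (simp add: h_def abs_mult)
    qed
    have A: "\<bar>(\<integral>y. h y \<partial>G \<gamma>) - (\<integral>y. h y \<partial>G \<gamma>')\<bar> \<le> 2 * L * ?W"
      by (rule W10_ge[OF f hlip hb])
    have hm: "h \<in> borel_measurable (G \<gamma>')" by (rule lip_meas[OF f(2) hlip])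
    have km: "k \<in> borel_measurable (G \<gamma>')"
      unfolding k_def by (intro borel_measurable_times fg[OF gI'] lip_meas[OF f(2) g(1)])
    have ih: "integrable (G \<gamma>') h" by (rule int_bound(2)[OF f(2) hm hb])
    have ik: "integrable (G \<gamma>') k"
    proof (rule int_bound(2)[OF f(2) km, of L], rule ballI)
      fix y assume y: "y \<in> I_int"
      have "\<bar>\<bar>f (\<gamma>',y)\<bar> * g y\<bar> \<le> L" using fb[OF gI' y] g(2) y by (intro aux_mb) auto
      then show "\<bar>k y\<bar> \<le> L" by (simp add: k_def abs_mult)
    qed
    have dm: "(\<lambda>y. h y - k y) \<in> borel_measurable (G \<gamma>')" using hm km by (rule borel_measurable_diff)
    have db: "\<forall>y\<in>I_int. \<bar>h y - k y\<bar> \<le> L * \<bar>\<gamma> - \<gamma>'\<bar>"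
    proof
      fix y assume y: "y \<in> I_int"
      have "\<bar>h y - k y\<bar> = \<bar>f (\<gamma>,y) - f (\<gamma>',y)\<bar> * \<bar>g y\<bar>" unfolding h_def k_def
        by (simp add: abs_mult[symmetric] left_diff_distrib)
      also have "\<dots> \<le> (L * \<bar>\<gamma> - \<gamma>'\<bar>) * 1"
        using flip[OF gI gI' y y] g(2) y by (intro mult_mono) (auto simp: dist_slice2)
      finally show "\<bar>h y - k y\<bar> \<le> L * \<bar>\<gamma> - \<gamma>'\<bar>" by simp
    qed
    have "\<bar>(\<integral>y. h y \<partial>G \<gamma>') - (\<integral>y. k y \<partial>G \<gamma>')\<bar> = \<bar>\<integral>y. h y - k y \<partial>G \<gamma>'\<bar>"
      using Bochner_Integration.integral_diff[OF ih ik] by simp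
    also have "\<dots> \<le> L * \<bar>\<gamma> - \<gamma>'\<bar> * measure (G \<gamma>') I_int" by (rule int_bound(1)[OF f(2) dm db])
    also have "\<dots> \<le> L * \<bar>\<gamma> - \<gamma>'\<bar> * (1 + K)" using mass L0 by (intro mult_left_mono) auto
    finally have B: "\<bar>(\<integral>y. h y \<partial>G \<gamma>') - (\<integral>y. k y \<partial>G \<gamma>')\<bar> \<le> L * \<bar>\<gamma> - \<gamma>'\<bar> * (1 + K)" .
    show "s \<le> 2 * L * ?W + L * \<bar>\<gamma> - \<gamma>'\<bar> * (1 + K)"
      using A B s' by linarith
  qed
qed



lemma Var_Gs:
  assumes sm: "sets \<mu> = sets (restrict_space borel Sq)" and R: "restrictions \<mu> G"
    and P: "prob_space \<mu>"
    and V: "Var (\<lambda>\<gamma>. (G \<gamma>, null_measure (G \<gamma>))) \<le> ereal K"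
    and lip: "L-lipschitz_on Sq f" and bnd: "\<forall>z\<in>Sq. \<bar>f z\<bar> \<le> L"
  shows "Var (Gs G f) \<le> ereal (3 * L * K + L)"
  unfolding Var_def
proof (rule SUP_least)
  fix xs :: "real list" assume "xs \<in> {xs. sorted_wrt (<) xs \<and> set xs \<subseteq> I_int}"
  then have xs: "sorted_wrt (<) xs" "set xs \<subseteq> I_int" by auto
  have L0: "0 \<le> L" using lip by (simp add: lipschitz_on_def)
  have K0: "0 \<le> K" by (rule K_nonneg[OF V])
  define m where "m = length xs - 1"
  let ?Wm = "\<lambda>i. W10 (G (xs ! i), null_measure (G (xs ! i))) (G (xs ! Suc i), null_measure (G (xs ! Suc i)))"
  have inI: "xs ! i \<in> I_int" if "i < length xs" for i using xs(2) that by auto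
  have S1: "(\<Sum>i<m. W10 (Gs G f (xs ! i)) (Gs G f (xs ! Suc i)))
      \<le> (\<Sum>i<m. 2 * L * ?Wm i + L * (1 + K) * (xs ! Suc i - xs ! i))"
  proof (rule sum_mono)
    fix i assume "i \<in> {..<m}"
    then have i: "i < length xs" "Suc i < length xs" unfolding m_def by auto
    have lt: "xs ! i < xs ! Suc i" using sorted_wrt_nth_less[OF xs(1) _ i(2)] by simp
    show "W10 (Gs G f (xs ! i)) (Gs G f (xs ! Suc i)) \<le> 2 * L * ?Wm i + L * (1 + K) * (xs ! Suc i - xs ! i)"
      using W10_Gs[OF sm R P V lip bnd inI[OF i(1)] inI[OF i(2)]] lt by (simp add: algebra_simps)
  qed
  have S2: "(\<Sum>i<m. 2 * L * ?Wm i + L * (1 + K) * (xs ! Suc i - xs ! i)) = 2 * L * (\<Sum>i<m. ?Wm i) + L * (1 + K) * (\<Sum>i<m. xs ! Suc i - xs ! i)"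
    by (simp add: sum.distrib sum_distrib_left)
  have S3: "(\<Sum>i<m. xs ! Suc i - xs ! i) = xs ! m - xs ! 0"
    by (rule sum_lessThan_telescope)
  have S4: "xs ! m - xs ! 0 \<le> 1"
  proof (cases "xs = []")
    case True then show ?thesis by (simp add: m_def)
  next
    case False
    then have "xs ! m \<in> I_int" "xs ! 0 \<in> I_int" using inI unfolding m_def by auto
    then show ?thesis by (auto simp: I_int_def)
  qed
  have S5: "(\<Sum>i<m. ?Wm i) \<le> K" unfolding m_def using Var_list[OF V xs] by simp
  have "2 * L * (\<Sum>i<m. ?Wm i) \<le> 2 * L * K" using S5 L0 by (intro mult_left_mono) auto
  moreover have "L * (1 + K) * (\<Sum>i<m. xs ! Suc i - xs ! i) \<le> L * (1 + K) * 1"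
    using S3 S4 L0 K0 by (intro mult_left_mono) auto
  ultimately have "(\<Sum>i<m. W10 (Gs G f (xs ! i)) (Gs G f (xs ! Suc i))) \<le> 3 * L * K + L"
    using S1 S2 by (simp add: algebra_simps)
  then show "ereal (\<Sum>i<length xs - 1. W10 (Gs G f (xs ! i)) (Gs G f (xs ! Suc i))) \<le> ereal (3 * L * K + L)"
    unfolding m_def by simp
qed


theorem lemma8p11:
  fixes \<mu> :: "nat \<Rightarrow> (real \<times> real) measure"
    and f :: "real \<times> real \<Rightarrow> real"
    and K L :: real
  assumes "\<And>n. prob_space (\<mu> n)"
    and "\<And>n. sets (\<mu> n) = sets (restrict_space borel Sq)"
    and "\<And>n. K_good K (\<mu> n)"
    and "L-lipschitz_on Sq f"
    and "\<forall>z\<in>Sq. \<bar>f z\<bar> \<le> L"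
  shows "\<forall>n. K_good_signed (3 * L * K + L) (dens (\<mu> n) f)"
proof
  fix n
  obtain G where R: "restrictions (\<mu> n) G" and V: "Var (\<lambda>\<gamma>. (G \<gamma>, null_measure (G \<gamma>))) \<le> ereal K"
    using assms(3)[of n] unfolding K_good_def by blast
  show "K_good_signed (3 * L * K + L) (dens (\<mu> n) f)"
    unfolding K_good_signed_def
    using part1[OF assms(2) R assms(1) assms(4) assms(5)] Var_Gs[OF assms(2) R assms(1) V assms(4) assms(5)]
    by blast
qed

end
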